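(* In the setting of the context, the image of the homomorphism $l\colon\mathrm{Aut}(X,c_1(L))\to\mathrm{GL}(g,\mathbb{Z})$ lies in $\mathrm{GL}(g,\mathbb{Z})\cap\mathrm{O}(g,B^{-1})$, where $\mathrm{O}(g,B^{-1}):=\{M\in\mathrm{GL}_g(\mathbb{R}) : {}^tMB^{-1}M=B^{-1}\}$.
   Context: $\Delta$ unit disc, $\Delta^*$ punctured disc, $\mathbb{C}((t))^{\mathrm{mero}}$ the field of germs at $0$ of meromorphic functions with poles only at $0$, $\mathrm{val}_t$ its $t$-adic valuation. Let $\mathcal{X}^*=\big((\mathbb{C}^* )^g\times\Delta^*\big)/\mathbb{Z}^g\to\Delta^*$ be a maximally degenerating family of polarized abelian varieties with polarization type $E=\mathrm{diag}(e_1,\dots,e_g)$, $m\in\mathbb{Z}^g$ acting by $Z_i\mapsto Z_i\prod_jp_{i,j}(t)^{m_j}$, $p_{i,j}=q_{i,j}^{e_i}$, $q_{i,j}\in\mathbb{C}((t))^{\mathrm{mero}}$ symmetric in $i,j$; the fibres are $\mathcal{X}_t=\mathbb{C}^g/(E\mathbb{Z}^g\oplus\Omega(t)\mathbb{Z}^g)$ with $\Omega(t)=(\frac{1}{2\pi\sqrt{-1}}\log q_{i,j}(t))$. Let $B=(\mathrm{val}_t q_{i,j}(t))_{i,j}$ (a positive definite symmetric integer matrix). $(X,L)$ is the associated polarized abelian variety over $\mathbb{C}((t))^{\mathrm{mero}}$, and $\mathrm{Aut}(X,c_1(L))$ is the group of automorphisms of $X$ preserving $c_1(L)$ (equivalently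 preserving the flat Kähler metric with class $c_1(\mathcal{L}_t)$ on each $\mathcal{X}_t$; each such automorphism extends to an automorphism of $\mathcal{X}^*$, after shrinking $\Delta$). For $f\in\mathrm{Aut}(X,c_1(L))$, $l(f)\in\mathrm{GL}(g,\mathbb{Z})$ is the restriction of $f_*$ on $H_1(\mathcal{X}_t,\mathbb{Z})=E\mathbb{Z}^g\oplus\Omega(t)\mathbb{Z}^g$ to the summand $E\mathbb{Z}^g\cong\mathbb{Z}^g$ (which it preserves); $l$ is a group homomorphism. *)

theory Defs
  imports "HOL-Complex_Analysis.Complex_Analysis"
begin

text \<open>Index type 'n of cardinality g.  Vectors in C^g are complex^'n, matrices complex^'n^'n.\<close>

text \<open>Germ at 0 of a meromorphic function with poles only at 0, not identically zero
  (so that its t-adic valuation, here zorder at 0, is a finite integer).\<close>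
definition mero_germ :: "(complex \<Rightarrow> complex) \<Rightarrow> bool" where
  "mero_germ f \<longleftrightarrow> (\<exists>r>0. f holomorphic_on (ball 0 r - {0})) \<and> not_essential f 0
      \<and> (\<exists>\<^sub>F z in at 0. f z \<noteq> 0)"

definition valt :: "(complex \<Rightarrow> complex) \<Rightarrow> int" where
  "valt f = zorder f 0"

definition Bmat :: "('n \<Rightarrow> 'n \<Rightarrow> complex \<Rightarrow> complex) \<Rightarrow> real^'n^'n" where
  "Bmat q = (\<chi> i j. real_of_int (valt (q i j)))"

definition posdef :: "real^'n^'n \<Rightarrow> bool" where
  "posdef M \<longleftrightarrow> transpose M = M \<and> (\<forall>x. x \<noteq> 0 \<longrightarrow> x \<bullet> (M *v x) > 0)"

definition Emat :: "('n \<Rightarrow> nat) \<Rightarrow> complex^'n^'n" where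
  "Emat e = (\<chi> i j. if i = j then of_nat (e i) else 0)"

definition intvecs :: "(complex^'n) set" where
  "intvecs = {v. \<forall>i. v $ i \<in> \<int>}"

definition Lat :: "('n \<Rightarrow> nat) \<Rightarrow> complex^'n^'n \<Rightarrow> (complex^'n) set" where
  "Lat e Om = {Emat e *v m + Om *v n | m n. m \<in> intvecs \<and> n \<in> intvecs}"

definition ImM :: "complex^'n^'n \<Rightarrow> real^'n^'n" where
  "ImM M = (\<chi> i j. Im (M $ i $ j))"

definition cmat :: "real^'n^'n \<Rightarrow> complex^'n^'n" where
  "cmat M = (\<chi> i j. complex_of_real (M $ i $ j))"

definition cnjM :: "complex^'n^'n \<Rightarrow> complex^'n^'n" where
  "cnjM M = (\<chi> i j. cnj (M $ i $ j))"

text \<open>Universal cover of a punctured disc: s with Im s > R, t = exp(2 pi i s).\<close>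
definition Ucov :: "real \<Rightarrow> complex set" where
  "Ucov R = {s. Im s > R}"

text \<open>Standing assumptions on the family: Om s is a holomorphic branch of
  (1/(2 pi i)) log q_ij(t) with t = exp(2 pi i s), symmetric with positive definite
  imaginary part, and the lattice is invariant under s -> s+1 (so the family descends to
  the punctured disc).\<close>
definition family_data :: "('n \<Rightarrow> nat) \<Rightarrow> ('n \<Rightarrow> 'n \<Rightarrow> complex \<Rightarrow> complex)
    \<Rightarrow> (complex \<Rightarrow> complex^'n^'n) \<Rightarrow> real \<Rightarrow> bool" where
  "family_data e q Om R \<longleftrightarrow>
     (\<forall>i j. (\<lambda>s. Om s $ i $ j) holomorphic_on Ucov R) \<and>
     (\<forall>s\<in>Ucov R. \<forall>i j. exp (2 * pi * \<i> * Om s $ i $ j) = q i j (exp (2 * pi * \<i> * s))) \<and>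
     (\<forall>s\<in>Ucov R. transpose (Om s) = Om s \<and> posdef (ImM (Om s))) \<and>
     (\<forall>s\<in>Ucov R. Lat e (Om (s + 1)) = Lat e (Om s))"

text \<open>Automorphism of the family (fixing the origin) preserving the flat Kaehler metric
  H_t(v,w) = v^T (Im Omega)^{-1} conj w of class c_1(L_t) on every fibre
  C^g / (E Z^g + Omega Z^g): a holomorphically varying complex linear map A(s),
  descending to the punctured disc (A(s+1) = A(s)), mapping the lattice onto itself.\<close>
definition aut_c1 :: "('n \<Rightarrow> nat) \<Rightarrow> (complex \<Rightarrow> complex^'n^'n) \<Rightarrow> real
    \<Rightarrow> (complex \<Rightarrow> complex^'n^'n) \<Rightarrow> bool" where
  "aut_c1 e Om R A \<longleftrightarrow>
     (\<forall>i j. (\<lambda>s. A s $ i $ j) holomorphic_on Ucov R) \<and>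
     (\<forall>s\<in>Ucov R. invertible (A s) \<and> A (s + 1) = A s \<and>
        (\<lambda>v. A s *v v) ` Lat e (Om s) = Lat e (Om s) \<and>
        transpose (A s) ** cmat (matrix_inv (ImM (Om s))) ** cnjM (A s)
          = cmat (matrix_inv (ImM (Om s))))"

definition GLZ :: "(real^'n^'n) set" where
  "GLZ = {M. (\<forall>i j. M $ i $ j \<in> \<int>) \<and> (det M = 1 \<or> det M = -1)}"

definition Orth :: "real^'n^'n \<Rightarrow> (real^'n^'n) set" where
  "Orth Q = {M. invertible M \<and> transpose M ** Q ** M = Q}"

text \<open>l(f): the restriction of f_* to the summand E Z^g, i.e. the real matrix L with
  A v = L v for all v in E Z^g (written in the standard coordinates of R^g, the real span
  of E Z^g).\<close>
definition restricts_to :: "('n \<Rightarrow> nat) \<Rightarrow> complex^'n^'n \<Rightarrow> real^'n^'n \<Rightarrow> bool" where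
  "restricts_to e A L \<longleftrightarrow> (\<forall>m\<in>intvecs. A *v (Emat e *v m) = cmat L *v (Emat e *v m))"

end

theory Submission
  imports Defs
begin

definition Rev :: "complex^'n \<Rightarrow> real^'n" where "Rev v = (\<chi> i. Re (v$i))"
definition Imv :: "complex^'n \<Rightarrow> real^'n" where "Imv v = (\<chi> i. Im (v$i))"
definition cvec :: "real^'n \<Rightarrow> complex^'n" where "cvec x = (\<chi> i. complex_of_real (x$i))"
definition qf :: "complex^'n^'n \<Rightarrow> complex^'n \<Rightarrow> complex" where
  "qf M u = (\<Sum>i\<in>UNIV. \<Sum>j\<in>UNIV. u$i * M$i$j * cnj (u$j))"

lemma minv:
  assumes "invertible (M::'a::semiring_1^'n^'n)"
  shows "M ** matrix_inv M = mat 1 \<and> matrix_inv M ** M = mat 1"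
  using assms unfolding matrix_inv_def invertible_def by (rule someI_ex)

lemma posdef_inv:
  assumes "posdef (M::real^'n^'n)" shows "invertible M"
proof -
  have "inj ((*v) M)"
  proof (rule injI)
    fix x y assume "M *v x = M *v y"
    then have "M *v (x - y) = 0" by (simp add: matrix_vector_mult_diff_distrib)
    then have "(x - y) \<bullet> (M *v (x - y)) = 0" by simp
    then show "x = y" using assms unfolding posdef_def by (metis eq_iff_diff_eq_0 less_irrefl)
  qed
  then show ?thesis
    using matrix_left_invertible_injective invertible_left_inverse by blast
qed

lemma cmat_mult: "cmat P ** cmat Q = cmat (P ** Q)"
  by (simp add: cmat_def matrix_matrix_mult_def vec_eq_iff)

lemma cmat_transpose: "transpose (cmat P) = cmat (transpose P)"
  by (simp add: cmat_def transpose_def vec_eq_iff)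

lemma cnjM_cmat: "cnjM (cmat P) = cmat P"
  by (simp add: cmat_def cnjM_def vec_eq_iff)

lemma cmat_inj: "cmat P = cmat Q \<Longrightarrow> P = Q"
  by (simp add: cmat_def vec_eq_iff)

lemma Imv_cmat: "Imv (cmat P *v u) = P *v Imv u"
  by (simp add: Imv_def cmat_def matrix_vector_mult_def vec_eq_iff Im_sum)

lemma Rev_cmat: "Rev (cmat P *v u) = P *v Rev u"
  by (simp add: Rev_def cmat_def matrix_vector_mult_def vec_eq_iff Re_sum)

lemma Ints_Im: "(x::complex) \<in> \<int> \<Longrightarrow> Im x = 0"
  by (auto elim!: Ints_cases)

lemma Ints_Re: "(x::complex) \<in> \<int> \<Longrightarrow> Re x \<in> \<int>"
  by (auto elim!: Ints_cases)

lemma intvecs_Im: "b \<in> intvecs \<Longrightarrow> Im (b$i) = 0"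
  unfolding intvecs_def by (simp add: Ints_Im)

lemma intvecs_Re: "b \<in> intvecs \<Longrightarrow> Rev b $ i \<in> \<int>"
  unfolding intvecs_def Rev_def by (simp add: Ints_Re)

lemma Imv_Emat: "a \<in> intvecs \<Longrightarrow> Imv (Emat e *v a) = 0"
  by (auto simp add: Imv_def Emat_def matrix_vector_mult_def vec_eq_iff Im_sum intvecs_Im intro!: sum.neutral)

lemma Imv_Om: "b \<in> intvecs \<Longrightarrow> Imv (M *v b) = ImM M *v Rev b"
  by (simp add: Imv_def ImM_def Rev_def matrix_vector_mult_def vec_eq_iff Im_sum intvecs_Im)

lemma Imv_add: "Imv (u + w) = Imv u + Imv w"
  by (simp add: Imv_def vec_eq_iff)

lemma sum_swap4: "(\<Sum>i\<in>A. \<Sum>j\<in>B. \<Sum>k\<in>C. \<Sum>l\<in>D. f i j k l) = (\<Sum>k\<in>C. \<Sum>l\<in>D. \<Sum>i\<in>A. \<Sum>j\<in>B. f i j k l)"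
proof -
  have "(\<Sum>i\<in>A. \<Sum>j\<in>B. \<Sum>k\<in>C. \<Sum>l\<in>D. f i j k l) = (\<Sum>i\<in>A. \<Sum>k\<in>C. \<Sum>l\<in>D. \<Sum>j\<in>B. f i j k l)"
    apply (rule sum.cong[OF refl]) apply (rule trans[OF sum.swap]) apply (rule sum.cong[OF refl]) apply (rule sum.swap) done
  also have "\<dots> = (\<Sum>k\<in>C. \<Sum>i\<in>A. \<Sum>l\<in>D. \<Sum>j\<in>B. f i j k l)" by (rule sum.swap)
  also have "\<dots> = (\<Sum>k\<in>C. \<Sum>l\<in>D. \<Sum>i\<in>A. \<Sum>j\<in>B. f i j k l)" apply (rule sum.cong[OF refl]) by (rule sum.swap)
  finally show ?thesis .
qed

lemma qf_transform:
  fixes A M :: "complex^'n^'n" and u :: "complex^'n"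
  shows "qf (transpose A ** M ** cnjM A) u = qf M (A *v u)"
proof -
  have "qf (transpose A ** M ** cnjM A) u =
     (\<Sum>i\<in>UNIV. \<Sum>j\<in>UNIV. u$i * (\<Sum>k\<in>UNIV. \<Sum>l\<in>UNIV. A$k$i * M$k$l * cnj (A$l$j)) * cnj (u$j))"
    unfolding qf_def
    apply (simp add: matrix_matrix_mult_def transpose_def cnjM_def sum_distrib_left sum_distrib_right
         mult.assoc)
    apply (rule sum.cong[OF refl], rule sum.cong[OF refl])
    apply (rule sum.swap)
    done
  also have "\<dots> = (\<Sum>k\<in>UNIV. \<Sum>l\<in>UNIV. \<Sum>i\<in>UNIV. \<Sum>j\<in>UNIV. (A$k$i * u$i) * M$k$l * (cnj (A$l$j) * cnj (u$j)))"
    by (subst sum_swap4[symmetric]) (simp add: sum_distrib_left sum_distrib_right ac_simps)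
  also have "\<dots> = (\<Sum>k\<in>UNIV. \<Sum>l\<in>UNIV. (\<Sum>i\<in>UNIV. A$k$i * u$i) * M$k$l * cnj (\<Sum>j\<in>UNIV. A$l$j * u$j))"
    apply (simp add: sum_distrib_left sum_distrib_right cnj_sum)
    apply (rule sum.cong[OF refl], rule sum.cong[OF refl])
    by (rule sum.swap)
  also have "\<dots> = qf M (A *v u)"
    unfolding qf_def by (simp add: matrix_vector_mult_def)
  finally show ?thesis .
qed

lemma Re_qf: "Re (qf (cmat P) u) = Rev u \<bullet> (P *v Rev u) + Imv u \<bullet> (P *v Imv u)"
  unfolding qf_def
  by (simp add: Re_sum cmat_def Rev_def Imv_def inner_vec_def matrix_vector_mult_def
      sum_distrib_left sum.distrib[symmetric] algebra_simps)

lemma int_const: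
  fixes f :: "'a::topological_space \<Rightarrow> real"
  assumes S: "connected S" and c: "continuous_on S f" and I: "\<forall>x\<in>S. f x \<in> \<int>"
    and "x \<in> S" "y \<in> S"
  shows "f x = f y"
proof -
  have "f constant_on S"
  proof (rule continuous_discrete_range_constant[OF S c])
    fix x assume x: "x \<in> S"
    show "\<exists>e>0. \<forall>y. y \<in> S \<and> f y \<noteq> f x \<longrightarrow> e \<le> norm (f y - f x)"
    proof (intro exI[of _ 1] conjI allI impI)
      fix y assume "y \<in> S \<and> f y \<noteq> f x"
      then show "1 \<le> norm (f y - f x)"
        using I x by (simp add: Ints_nonzero_abs_ge1)
    qed simp
  qed
  then show ?thesis using assms unfolding constant_on_def by metis
qed

lemma continuous_det:
  fixes M :: "'a::topological_space \<Rightarrow> real^'n^'n"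
  assumes "\<And>i j. continuous_on S (\<lambda>s. M s $ i $ j)"
  shows "continuous_on S (\<lambda>s. det (M s))"
  unfolding det_def
  by (intro continuous_intros assms)

lemma posdef_min:
  fixes M :: "real^'n^'n"
  assumes "posdef M"
  shows "\<exists>l>0. \<forall>x. l * (norm x)^2 \<le> x \<bullet> (M *v x)"
proof -
  have cont: "continuous_on (sphere 0 1) (\<lambda>x. x \<bullet> (M *v x))"
    by (intro continuous_intros linear_continuous_on matrix_vector_mul_linear)
  have ne: "sphere (0::real^'n) 1 \<noteq> {}"
    using norm_axis_1 by (metis mem_sphere_0 empty_iff)
  obtain x0 where x0: "x0 \<in> sphere 0 1" and mn: "\<forall>y\<in>sphere 0 1. x0 \<bullet> (M *v x0) \<le> y \<bullet> (M *v y)"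
    using continuous_attains_inf[OF compact_sphere ne cont] by blast
  have x0nz: "x0 \<noteq> 0" using x0 by auto
  have pos: "x0 \<bullet> (M *v x0) > 0" using assms x0nz unfolding posdef_def by blast
  show ?thesis
  proof (intro exI[of _ "x0 \<bullet> (M *v x0)"] conjI allI pos)
    fix x :: "real^'n"
    show "x0 \<bullet> (M *v x0) * (norm x)\<^sup>2 \<le> x \<bullet> (M *v x)"
    proof (cases "x = 0")
      case True then show ?thesis by simp
    next
      case False
      define u where "u = (1 / norm x) *\<^sub>R x"
      have u: "u \<in> sphere 0 1" using False by (simp add: u_def)
      have xu: "x = norm x *\<^sub>R u" using False by (simp add: u_def)
      have "x \<bullet> (M *v x) = (norm x)\<^sup>2 * (u \<bullet> (M *v u))"
        by (subst xu, subst xu) (simp add: matrix_vector_mult_scaleR power2_eq_square)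
      moreover have "x0 \<bullet> (M *v x0) \<le> u \<bullet> (M *v u)" using mn u by blast
      ultimately show ?thesis
        by (metis mult.commute mult_right_mono zero_le_power2)
    qed
  qed
qed

lemma asym1:
  fixes f y :: "complex \<Rightarrow> complex"
  assumes mg: "mero_germ f"
    and rel: "\<forall>s. Im s > R0 \<longrightarrow> exp (2 * pi * \<i> * y s) = f (exp (2 * pi * \<i> * s))"
  shows "\<exists>T K. \<forall>s. Im s \<ge> T \<longrightarrow> \<bar>Im (y s) - of_int (valt f) * Im s\<bar> \<le> K"
proof -
  obtain r where r: "r > 0" "f holomorphic_on (ball 0 r - {0})" and ne: "not_essential f 0"
    and fr: "\<exists>\<^sub>F z in at 0. f z \<noteq> 0"
    using mg unfolding mero_germ_def by blast
  have iso: "isolated_singularity_at f 0"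
    by (rule isolated_singularity_at_holomorphic[OF r(2)]) (use r in auto)
  define n where "n = zorder f 0"
  define g where "g = zor_poly f 0"
  obtain r1 where r1: "r1 > 0" "g holomorphic_on cball 0 r1"
     and fg: "\<forall>w\<in>cball 0 r1 - {0}. f w = g w * (w - 0) powi n \<and> g w \<noteq> 0"
     and g0: "g 0 \<noteq> 0"
    using zorder_exist[OF iso ne fr] unfolding n_def g_def by blast
  have gnz: "\<forall>w\<in>cball 0 r1. g w \<noteq> 0" using fg g0 by (metis DiffI singletonD)
  have "continuous_on (cball 0 r1) (\<lambda>w. ln (norm (g w)))"
    using r1(2) gnz by (intro continuous_intros holomorphic_on_imp_continuous_on) auto
  then have "compact ((\<lambda>w. ln (norm (g w))) ` cball 0 r1)"
    by (intro compact_continuous_image compact_cball)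
  then have "bounded ((\<lambda>w. ln (norm (g w))) ` cball 0 r1)" by (rule compact_imp_bounded)
  then obtain K0 where "\<forall>x\<in>(\<lambda>w. ln (norm (g w))) ` cball 0 r1. norm x \<le> K0"
    unfolding bounded_iff by blast
  then have K0: "\<forall>w\<in>cball 0 r1. \<bar>ln (norm (g w))\<bar> \<le> K0" by auto
  define T where "T = max (R0 + 1) (- ln r1 / (2 * pi))"
  show ?thesis
  proof (rule exI[of _ T], rule exI[of _ "K0 / (2 * pi)"], intro allI impI)
    fix s assume sT: "T \<le> Im s"
    define t where "t = exp (2 * pi * \<i> * s)"
    have nt: "norm t = exp (- 2 * pi * Im s)" by (simp add: t_def)
    have "- 2 * pi * Im s \<le> ln r1" using sT unfolding T_def
      by (simp add: field_simps)
    then have "norm t \<le> r1" using nt r1(1) by (metis exp_le_cancel_iff exp_ln)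
    moreover have "t \<noteq> 0" by (simp add: t_def)
    ultimately have tin: "t \<in> cball 0 r1 - {0}" by simp
    have "exp (2 * pi * \<i> * y s) = f t" using rel sT unfolding T_def t_def by auto
    then have "norm (exp (2 * pi * \<i> * y s)) = norm (f t)" by simp
    moreover have "norm (exp (2 * pi * \<i> * y s)) = exp (- 2 * pi * Im (y s))" by simp
    moreover have "norm (f t) = norm (g t) * norm t powi n"
      using fg tin by (simp add: norm_mult norm_power_int)
    ultimately have "exp (- 2 * pi * Im (y s)) = norm (g t) * norm t powi n" by simp
    also have "norm t powi n = exp (of_int n * (- 2 * pi * Im s))"
      by (simp add: nt exp_power_int)
    finally have eq: "exp (- 2 * pi * Im (y s)) = norm (g t) * exp (of_int n * (- 2 * pi * Im s))" .
    have gp: "norm (g t) > 0" using gnz tin by auto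
    have "- 2 * pi * Im (y s) = ln (norm (g t)) + of_int n * (- 2 * pi * Im s)"
      using arg_cong[OF eq, of ln] gp by (simp add: ln_mult)
    then have "Im (y s) - of_int n * Im s = - ln (norm (g t)) / (2 * pi)"
      by (simp add: field_simps)
    moreover have "\<bar>ln (norm (g t))\<bar> \<le> K0" using K0 tin by auto
    ultimately have "\<bar>Im (y s) - of_int n * Im s\<bar> \<le> K0 / (2 * pi)"
      by (simp add: abs_div divide_right_mono)
    then show "\<bar>Im (y s) - real_of_int (valt f) * Im s\<bar> \<le> K0 / (2 * pi)"
      unfolding valt_def n_def by simp
  qed
qed

lemma asymY:
  fixes q :: "'n::finite \<Rightarrow> 'n \<Rightarrow> complex \<Rightarrow> complex" and Om :: "complex \<Rightarrow> complex^'n^'n"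
  assumes mg: "\<forall>i j. mero_germ (q i j)" and fd: "family_data e q Om R0"
  shows "\<exists>T K. \<forall>s. Im s \<ge> T \<longrightarrow> (\<forall>i j. \<bar>ImM (Om s) $ i $ j - Bmat q $ i $ j * Im s\<bar> \<le> K)"
proof -
  have "\<forall>p::'n\<times>'n. \<exists>TK::real\<times>real. \<forall>s. Im s \<ge> fst TK \<longrightarrow>
     \<bar>Im (Om s $ fst p $ snd p) - of_int (valt (q (fst p) (snd p))) * Im s\<bar> \<le> snd TK"
  proof
    fix p :: "'n\<times>'n"
    have "\<forall>s. Im s > R0 \<longrightarrow> exp (2 * pi * \<i> * Om s $ fst p $ snd p) = q (fst p) (snd p) (exp (2 * pi * \<i> * s))"
      using fd unfolding family_data_def Ucov_def by auto
    from asym1[OF mg[rule_format] this] show "\<exists>TK::real\<times>real. \<forall>s. Im s \<ge> fst TK \<longrightarrow>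
     \<bar>Im (Om s $ fst p $ snd p) - of_int (valt (q (fst p) (snd p))) * Im s\<bar> \<le> snd TK"
      by auto
  qed
  then have "\<exists>F. \<forall>p::'n\<times>'n. \<forall>s. Im s \<ge> fst (F p) \<longrightarrow>
     \<bar>Im (Om s $ fst p $ snd p) - of_int (valt (q (fst p) (snd p))) * Im s\<bar> \<le> snd (F p)"
    by (rule choice)
  then obtain F where F: "\<forall>p::'n\<times>'n. \<forall>s. Im s \<ge> fst (F p) \<longrightarrow>
     \<bar>Im (Om s $ fst p $ snd p) - of_int (valt (q (fst p) (snd p))) * Im s\<bar> \<le> snd (F p)"
    by blast
  define T where "T = (\<Sum>p\<in>UNIV. \<bar>fst (F p)\<bar>)"
  define K where "K = (\<Sum>p\<in>UNIV. \<bar>snd (F p)\<bar>)"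
  show ?thesis
  proof (rule exI[of _ T], rule exI[of _ K], intro allI impI)
    fix s i j assume sT: "T \<le> Im s"
    have "\<bar>fst (F (i,j))\<bar> \<le> T"
      unfolding T_def by (rule member_le_sum) auto
    then have "fst (F (i,j)) \<le> T" by linarith
    then have "\<bar>Im (Om s $ i $ j) - of_int (valt (q i j)) * Im s\<bar> \<le> snd (F (i,j))"
      using F[rule_format, of "(i,j)" s] sT \<open>fst (F (i,j)) \<le> T\<close> by simp
    also have "\<bar>snd (F (i,j))\<bar> \<le> K"
      unfolding K_def by (rule member_le_sum) auto
    then have "snd (F (i,j)) \<le> K" by linarith
    finally show "\<bar>ImM (Om s) $ i $ j - Bmat q $ i $ j * Im s\<bar> \<le> K"
      by (simp add: ImM_def Bmat_def)
  qed
qed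

lemma quad_bound:
  fixes D :: "real^'n^'n" and z :: "real^'n"
  assumes "\<forall>i j. \<bar>D$i$j\<bar> \<le> K"
  shows "\<bar>z \<bullet> (D *v z)\<bar> \<le> (real CARD('n))^2 * K * (norm z)^2"
proof -
  have "\<bar>z \<bullet> (D *v z)\<bar> = \<bar>\<Sum>i\<in>UNIV. \<Sum>j\<in>UNIV. z$i * D$i$j * z$j\<bar>"
    by (simp add: inner_vec_def matrix_vector_mult_def sum_distrib_left mult.assoc)
  also have "\<dots> \<le> (\<Sum>i\<in>UNIV. \<bar>\<Sum>j\<in>UNIV. z$i * D$i$j * z$j\<bar>)" by (rule sum_abs)
  also have "\<dots> \<le> (\<Sum>i\<in>UNIV. \<Sum>j\<in>UNIV. \<bar>z$i * D$i$j * z$j\<bar>)" by (intro sum_mono sum_abs)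
  also have "\<dots> \<le> (\<Sum>i\<in>(UNIV::'n set). \<Sum>j\<in>(UNIV::'n set). K * (norm z)^2)"
  proof (intro sum_mono)
    fix i j
    have K0: "0 \<le> K" using assms by (meson abs_ge_zero order_trans)
    have zz: "\<bar>z$i\<bar> * \<bar>z$j\<bar> \<le> norm z * norm z"
      using component_le_norm_cart[of z i] component_le_norm_cart[of z j]
      by (intro mult_mono) auto
    have "\<bar>z$i * D$i$j * z$j\<bar> = \<bar>D$i$j\<bar> * (\<bar>z$i\<bar> * \<bar>z$j\<bar>)" by (simp add: abs_mult)
    also have "\<dots> \<le> K * (norm z * norm z)"
      using assms K0 zz by (rule_tac mult_mono) auto
    finally show "\<bar>z$i * D$i$j * z$j\<bar> \<le> K * (norm z)^2" by (simp add: power2_eq_square)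
  qed
  also have "\<dots> = (real CARD('n))^2 * K * (norm z)^2" by (simp add: power2_eq_square)
  finally show ?thesis .
qed

lemma key_ineq:
  fixes Y Yi :: "real^'n^'n" and v P b :: "real^'n"
  assumes inv1: "Y ** Yi = mat 1" and inv2: "Yi ** Y = mat 1"
    and mu: "\<mu> > 0" and lower: "\<forall>z. \<mu> * (norm z)^2 \<le> z \<bullet> (Y *v z)"
    and eq: "v \<bullet> (Yi *v v) = P \<bullet> (Yi *v P) + (Y *v b) \<bullet> (Yi *v (Y *v b))"
  shows "\<mu> * (norm b)^2 \<le> (norm v)^2 / \<mu>"
proof -
  have hback: "Y *v (Yi *v w) = w" for w
    by (simp add: matrix_vector_mul_assoc inv1)
  have form: "w \<bullet> (Yi *v w) = (Yi *v w) \<bullet> (Y *v (Yi *v w))" for w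
    by (simp add: hback inner_commute)
  have "0 \<le> \<mu> * (norm (Yi *v P))^2" using mu by simp
  also have "\<dots> \<le> (Yi *v P) \<bullet> (Y *v (Yi *v P))" using lower by blast
  also have "\<dots> = P \<bullet> (Yi *v P)" using form[of P] by simp
  finally have P0: "P \<bullet> (Yi *v P) \<ge> 0" .
  have "(Y *v b) \<bullet> (Yi *v (Y *v b)) = b \<bullet> (Y *v b)"
    by (simp add: matrix_vector_mul_assoc inv2 inner_commute)
  then have Qb: "(Y *v b) \<bullet> (Yi *v (Y *v b)) \<ge> \<mu> * (norm b)^2" using lower by simp
  define z where "z = Yi *v v"
  have vz: "v \<bullet> z = z \<bullet> (Y *v z)" using form[of v] by (simp add: z_def)
  have "\<mu> * (norm z)^2 \<le> norm v * norm z"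
  proof -
    have "\<mu> * (norm z)^2 \<le> z \<bullet> (Y *v z)" using lower by blast
    also have "\<dots> = v \<bullet> z" using vz by simp
    also have "\<dots> \<le> norm v * norm z" by (rule Cauchy_Schwarz_ineq2[THEN order_trans[OF abs_ge_self]])
    finally show ?thesis .
  qed
  then have "\<mu> * norm z \<le> norm v"
    by (cases "norm z = 0") (auto simp: power2_eq_square)
  then have "norm z \<le> norm v / \<mu>" using mu by (simp add: field_simps)
  then have "norm v * norm z \<le> norm v * (norm v / \<mu>)"
    by (rule mult_left_mono) simp
  moreover have "v \<bullet> z \<le> norm v * norm z"
    by (rule Cauchy_Schwarz_ineq2[THEN order_trans[OF abs_ge_self]])
  ultimately have "v \<bullet> z \<le> (norm v)^2 / \<mu>"
    by (simp add: power2_eq_square)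
  then show ?thesis using eq P0 Qb unfolding z_def by linarith
qed

definition crv :: "real^'n^'n \<Rightarrow> real^'n \<Rightarrow> real^'n" where
  "crv M w = (\<chi> j. det (\<chi> i j'. if j' = j then w$i else M$i$j') / det M)"

lemma crv_unique: "det M \<noteq> 0 \<Longrightarrow> M *v x = w \<Longrightarrow> x = crv M w"
  unfolding crv_def using cramer by blast

lemma crv_sol: "det M \<noteq> 0 \<Longrightarrow> M *v crv M w = w"
  unfolding crv_def using cramer by blast

lemma crv_cont:
  fixes M :: "'a::topological_space \<Rightarrow> real^'n^'n" and w :: "'a \<Rightarrow> real^'n"
  assumes "\<And>i j. continuous_on S (\<lambda>s. M s $ i $ j)" "\<And>i. continuous_on S (\<lambda>s. w s $ i)"
    and "\<And>s. s \<in> S \<Longrightarrow> det (M s) \<noteq> 0"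
  shows "continuous_on S (\<lambda>s. crv (M s) (w s) $ j)"
proof -
  have "continuous_on S (\<lambda>s. det (\<chi> i j'. if j' = j then w s $i else M s $i$j'))"
  proof (rule continuous_det)
    fix i j'
    show "continuous_on S (\<lambda>s. (\<chi> i j'. if j' = j then w s $i else M s $i$j') $ i $ j')"
      using assms by (cases "j' = j") auto
  qed
  moreover have "continuous_on S (\<lambda>s. det (M s))" by (rule continuous_det) (rule assms)
  ultimately show ?thesis unfolding crv_def using assms(3)
    by (simp add: continuous_on_divide)
qed

lemma Emat_mult_nth: "(Emat e *v x) $ l = of_nat (e l) * x $ l"
  unfolding Emat_def matrix_vector_mult_def
  by (simp add: if_distrib[of "\<lambda>a. a * _"] sum.delta cong: if_cong)

lemma cvec_int: "(\<forall>i. y $ i \<in> \<int>) \<Longrightarrow> cvec y \<in> intvecs"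
  by (auto simp: cvec_def intvecs_def)

lemma axis_int: "\<forall>i. (axis k (1::real)) $ i \<in> \<int>"
  by (simp add: axis_def)

lemma Rev_cvec: "Rev (cvec y) = y" by (simp add: Rev_def cvec_def vec_eq_iff)
lemma Imv_cvec: "Imv (cvec y) = 0" by (simp add: Imv_def cvec_def vec_eq_iff)

lemma intvec_zero: "b \<in> intvecs \<Longrightarrow> Rev b = 0 \<Longrightarrow> b = 0"
  by (simp add: vec_eq_iff Rev_def intvecs_Im complex_eq_iff)

lemma lin_zero:
  fixes c M T :: real
  assumes "\<forall>t\<ge>T. \<bar>t * c\<bar> \<le> M" shows "c = 0"
proof (rule ccontr)
  assume c: "c \<noteq> 0"
  define t where "t = max T 0 + (\<bar>M\<bar> + 1) / \<bar>c\<bar>"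
  have "t \<ge> T" unfolding t_def using c by (simp add: add_increasing2 max.coboundedI1)
  have t0: "t \<ge> (\<bar>M\<bar> + 1) / \<bar>c\<bar>" unfolding t_def by simp
  have "\<bar>t * c\<bar> = t * \<bar>c\<bar>" using t0 c
    by (simp add: abs_mult) (smt (verit) divide_nonneg_nonneg abs_ge_zero)
  also have "\<dots> \<ge> \<bar>M\<bar> + 1" using t0 c by (simp add: field_simps)
  finally show False using assms \<open>t \<ge> T\<close> by force
qed

lemma entry_bound:
  fixes P D Q :: "real^'n^'n"
  assumes "\<forall>i j. \<bar>D$i$j\<bar> \<le> K"
  shows "\<bar>(P ** D ** Q)$i$j\<bar> \<le> (\<Sum>k\<in>UNIV. \<Sum>l\<in>UNIV. \<bar>P$i$k\<bar> * \<bar>Q$l$j\<bar>) * K"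
proof -
  have "\<bar>(P ** D ** Q)$i$j\<bar> = \<bar>\<Sum>k\<in>UNIV. \<Sum>l\<in>UNIV. P$i$k * D$k$l * Q$l$j\<bar>"
    apply (simp add: matrix_matrix_mult_def sum_distrib_right)
    apply (subst sum.swap) ..
  also have "\<dots> \<le> (\<Sum>k\<in>UNIV. \<Sum>l\<in>UNIV. \<bar>P$i$k * D$k$l * Q$l$j\<bar>)"
    by (rule order_trans[OF sum_abs]) (intro sum_mono sum_abs)
  also have "\<dots> \<le> (\<Sum>k\<in>UNIV. \<Sum>l\<in>UNIV. \<bar>P$i$k\<bar> * \<bar>Q$l$j\<bar> * K)"
    apply (intro sum_mono)
    apply (simp add: abs_mult mult.commute mult.left_commute)
    by (metis assms mult.commute mult_right_mono abs_ge_zero mult_nonneg_nonneg)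
  also have "\<dots> = (\<Sum>k\<in>UNIV. \<Sum>l\<in>UNIV. \<bar>P$i$k\<bar> * \<bar>Q$l$j\<bar>) * K"
    by (simp add: sum_distrib_right)
  finally show ?thesis .
qed

lemma mm_add: "(P::real^'n^'n) ** (X + Z) ** Q = P ** X ** Q + P ** Z ** Q"
  by (simp add: matrix_matrix_mult_def vec_eq_iff sum.distrib[symmetric] algebra_simps sum_distrib_left sum_distrib_right)

lemma mm_scale: "(P::real^'n^'n) ** (t *\<^sub>R X) ** Q = t *\<^sub>R (P ** X ** Q)"
  by (simp add: matrix_matrix_mult_def vec_eq_iff algebra_simps sum_distrib_left sum_distrib_right)

lemma vk_mult:
  fixes M :: "complex^'n^'n"
  shows "(M *v (Emat e *v cvec (axis k 1))) $ i = M $ i $ k * of_nat (e k)"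
proof -
  have "(M *v v) $ i = (\<Sum>j\<in>UNIV. M$i$j * v$j)" for v :: "complex^'n"
    by (simp add: matrix_vector_mult_def)
  moreover have "(Emat e *v cvec (axis k 1)) $ j = (if j = k then of_nat (e k) else 0)" for j
    by (simp add: Emat_mult_nth cvec_def axis_def)
  ultimately show ?thesis
    by (simp add: if_distrib[of "\<lambda>x. _ * x"] sum.delta cong: if_cong)
qed

lemma axis_col: "(transpose (L::real^'n^'n) *v axis j 1) $ i = L $ j $ i"
  by (simp add: matrix_vector_mult_def transpose_def axis_def if_distrib[of "\<lambda>x. _ * x"]
      sum.delta cong: if_cong)

theorem lemma4p4:
  fixes e :: "'n::{finite,linorder} \<Rightarrow> nat"
    and q :: "'n::{finite,linorder} \<Rightarrow> 'n::{finite,linorder} \<Rightarrow> complex \<Rightarrow> complex"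
    and Om A :: "complex \<Rightarrow> complex^'n::{finite,linorder}^'n::{finite,linorder}"
    and R0 R :: real
  assumes "\<forall>i. e i > 0" and "\<forall>i j. i \<le> j \<longrightarrow> e i dvd e j"
    and "\<forall>i j. mero_germ (q i j)" and "\<forall>i j. q i j = q j i"
    and "posdef (Bmat q)"
    and "family_data e q Om R0"
    and "R \<ge> R0"
    and "aut_c1 e Om R A"
  shows "\<forall>s\<in>Ucov R. \<exists>L. restricts_to e (A s) L \<and> L \<in> GLZ \<and>
           L \<in> Orth (matrix_inv (Bmat q))"
proof
  fix s0 assume s0: "s0 \<in> Ucov R"
  note epos = assms(1) and mg = assms(3) and Bpd = assms(5) and fd = assms(6) and RR = assms(7)
    and aut = assms(8)
  define U where "U = Ucov R"
  have U_def': "U = {s. Im s > R}" unfolding U_def Ucov_def ..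
  have conn: "connected U" unfolding U_def' by (intro convex_connected convex_halfspace_Im_gt)
  have sU0: "s \<in> Ucov R0" if "s \<in> U" for s using that RR unfolding U_def' Ucov_def by auto
  define Y where "Y s = ImM (Om s)" for s
  define Yi where "Yi s = matrix_inv (Y s)" for s
  have pdY: "posdef (Y s)" if "s \<in> U" for s
    using fd sU0[OF that] unfolding family_data_def Y_def by blast
  have invY: "Y s ** Yi s = mat 1 \<and> Yi s ** Y s = mat 1" if "s \<in> U" for s
    unfolding Yi_def using minv[OF posdef_inv[OF pdY[OF that]]] .
  have detY: "det (Y s) \<noteq> 0" if "s \<in> U" for s
    using posdef_inv[OF pdY[OF that]] invertible_det_nz by blast
  have contOm: "continuous_on U (\<lambda>s. Om s $ i $ j)" for i j
  proof -
    have "(\<lambda>s. Om s $ i $ j) holomorphic_on Ucov R0" using fd unfolding family_data_def by blast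
    then show ?thesis
      by (rule holomorphic_on_imp_continuous_on[OF holomorphic_on_subset]) (use sU0 in auto)
  qed
  have contY: "continuous_on U (\<lambda>s. Y s $ i $ j)" for i j
    unfolding Y_def ImM_def by (simp add: continuous_on_Im contOm)
  have contA: "continuous_on U (\<lambda>s. A s $ i $ j)" for i j
    using aut unfolding aut_c1_def U_def by (blast intro: holomorphic_on_imp_continuous_on)
  have autU: "invertible (A s) \<and> (\<lambda>v. A s *v v) ` Lat e (Om s) = Lat e (Om s) \<and>
        transpose (A s) ** cmat (Yi s) ** cnjM (A s) = cmat (Yi s)" if "s \<in> U" for s
    using aut that unfolding aut_c1_def U_def Yi_def Y_def by blast
  have LatE: "\<exists>a b. a \<in> intvecs \<and> b \<in> intvecs \<and> x = Emat e *v a + Om s *v b"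
    if "x \<in> Lat e (Om s)" for x s using that unfolding Lat_def by blast
  define vk where "vk k = Emat e *v cvec (axis k 1)" for k
  have vk_int: "cvec (axis k 1) \<in> intvecs" for k by (rule cvec_int[OF axis_int])
  have vk_in: "vk k \<in> Lat e (Om s)" for k s
  proof -
    have "(0::complex^_) \<in> intvecs" by (simp add: intvecs_def)
    then show ?thesis unfolding vk_def Lat_def using vk_int by force
  qed
  define beta where "beta k s = crv (Y s) (Imv (A s *v vk k))" for k s
  have beta_dec: "\<exists>a b. a \<in> intvecs \<and> b \<in> intvecs \<and> A s *v vk k = Emat e *v a + Om s *v b
     \<and> Rev b = beta k s" if "s \<in> U" for s k
  proof -
    have "A s *v vk k \<in> Lat e (Om s)" using autU[OF that] vk_in by blast
    then obtain a b where ab: "a \<in> intvecs" "b \<in> intvecs" "A s *v vk k = Emat e *v a + Om s *v b"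
      using LatE by blast
    have "Imv (A s *v vk k) = Y s *v Rev b"
      unfolding ab(3) Imv_add Imv_Emat[OF ab(1)] Imv_Om[OF ab(2)] Y_def by simp
    then have "Rev b = beta k s" unfolding beta_def using crv_unique[OF detY[OF that]] by metis
    then show ?thesis using ab by blast
  qed
  have beta_int: "beta k s $ j \<in> \<int>" if "s \<in> U" for s k j
    using beta_dec[OF that, of k] intvecs_Re by metis
  have beta_sol: "Y s *v beta k s = Imv (A s *v vk k)" if "s \<in> U" for s k
    unfolding beta_def by (rule crv_sol[OF detY[OF that]])
  have beta_cont: "continuous_on U (\<lambda>s. beta k s $ j)" for k j
    unfolding beta_def
  proof (rule crv_cont[OF contY _ detY])
    fix i show "continuous_on U (\<lambda>s. Imv (A s *v vk k) $ i)"
      unfolding Imv_def matrix_vector_mult_def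
      by (simp, intro continuous_intros contA)
  qed
  have beta_const: "beta k s = beta k s'" if "s \<in> U" "s' \<in> U" for k s s'
  proof -
    have "beta k s $ j = beta k s' $ j" for j
      by (rule int_const[OF conn beta_cont _ that]) (use beta_int in blast)
    then show ?thesis by (simp add: vec_eq_iff)
  qed
  obtain T K where TK: "\<forall>s. Im s \<ge> T \<longrightarrow> (\<forall>i j. \<bar>Y s $ i $ j - Bmat q $ i $ j * Im s\<bar> \<le> K)"
    using asymY[OF mg fd] unfolding Y_def by blast
  obtain lam where lam: "lam > 0" "\<forall>x. lam * (norm x)^2 \<le> x \<bullet> (Bmat q *v x)"
    using posdef_min[OF Bpd] by blast
  define kap where "kap = (real CARD('n))^2 * K"
  have lowerY: "\<forall>z. (lam * Im s - kap) * (norm z)^2 \<le> z \<bullet> (Y s *v z)"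
    if "Im s \<ge> T" "Im s \<ge> 0" for s
  proof
    fix z :: "real^'n::{finite,linorder}"
    define D where "D = Y s - Im s *\<^sub>R Bmat q"
    have Dle: "\<forall>i j. \<bar>D$i$j\<bar> \<le> K" using TK that by (simp add: D_def mult.commute)
    have "Y s = Im s *\<^sub>R Bmat q + D" by (simp add: D_def)
    then have eq: "z \<bullet> (Y s *v z) = Im s * (z \<bullet> (Bmat q *v z)) + z \<bullet> (D *v z)"
      by (simp add: matrix_vector_mult_add_rdistrib inner_add_right scaleR_matrix_vector_assoc[symmetric])
    have "Im s * (lam * (norm z)^2) \<le> Im s * (z \<bullet> (Bmat q *v z))"
      using lam(2) that(2) by (simp add: mult_left_mono)
    moreover have "\<bar>z \<bullet> (D *v z)\<bar> \<le> kap * (norm z)^2"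
      unfolding kap_def by (rule quad_bound[OF Dle])
    ultimately show "(lam * Im s - kap) * (norm z)^2 \<le> z \<bullet> (Y s *v z)"
      unfolding eq by (simp add: algebra_simps)
  qed
  have beta0: "beta k s = 0" if "s \<in> U" for k s
  proof -
    define v where "v = Rev (vk k)"
    define t where "t = max (max T (max (R + 1) 0)) ((kap + norm v + 1) / lam)"
    define ss where "ss = \<i> * complex_of_real t"
    have Imss: "Im ss = t" by (simp add: ss_def)
    have ssU: "ss \<in> U" unfolding U_def' using Imss t_def by auto
    define mu where "mu = lam * t - kap"
    have "lam * t \<ge> lam * ((kap + norm v + 1) / lam)"
      using lam(1) unfolding t_def by (intro mult_left_mono) auto
    then have mu1: "mu \<ge> norm v + 1" unfolding mu_def using lam(1) by simp
    have mupos: "mu > 0" using mu1 norm_ge_zero[of v] by linarith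
    have low: "\<forall>z. mu * (norm z)^2 \<le> z \<bullet> (Y ss *v z)"
      using lowerY[of ss] Imss t_def unfolding mu_def by auto
    have "qf (cmat (Yi ss)) (A ss *v vk k) = qf (cmat (Yi ss)) (vk k)"
      using qf_transform[of "A ss" "cmat (Yi ss)" "vk k"] autU[OF ssU] by simp
    then have "Re (qf (cmat (Yi ss)) (vk k)) = Re (qf (cmat (Yi ss)) (A ss *v vk k))" by simp
    moreover have "Imv (vk k) = 0" unfolding vk_def by (rule Imv_Emat[OF vk_int])
    ultimately have eq: "v \<bullet> (Yi ss *v v) = Rev (A ss *v vk k) \<bullet> (Yi ss *v Rev (A ss *v vk k))
        + (Y ss *v beta k ss) \<bullet> (Yi ss *v (Y ss *v beta k ss))"
      unfolding Re_qf v_def beta_sol[OF ssU] by simp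
    have ineq: "mu * (norm (beta k ss))^2 \<le> (norm v)^2 / mu"
      by (rule key_ineq[OF _ _ mupos low eq]) (use invY[OF ssU] in auto)
    have "beta k ss = 0"
    proof (rule ccontr)
      assume "beta k ss \<noteq> 0"
      then obtain j where j: "beta k ss $ j \<noteq> 0" by (auto simp: vec_eq_iff)
      have "1 \<le> \<bar>beta k ss $ j\<bar>" by (rule Ints_nonzero_abs_ge1[OF beta_int[OF ssU] j])
      also have "\<dots> \<le> norm (beta k ss)" by (rule component_le_norm_cart)
      finally have n1: "1 \<le> (norm (beta k ss))^2" by (simp add: one_le_power)
      have "mu * 1 \<le> mu * (norm (beta k ss))^2" using n1 mupos by (intro mult_left_mono) auto
      with ineq have "mu \<le> (norm v)^2 / mu" by simp
      then have "mu * mu \<le> (norm v)^2" using mupos by (simp add: field_simps)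
      moreover have "(norm v)^2 < mu * mu"
        unfolding power2_eq_square
        by (rule mult_strict_mono) (use mu1 mupos in auto)
      ultimately show False by simp
    qed
    then show ?thesis using beta_const[OF that ssU] by simp
  qed
  have s0U: "s0 \<in> U" using s0 U_def by simp
  have Adec: "Im (A s $ i $ k) = 0 \<and> Re (A s $ i $ k) * of_nat (e k) / of_nat (e i) \<in> \<int>"
    if sU: "s \<in> U" for s i k
  proof -
    obtain a b where ab: "a \<in> intvecs" "b \<in> intvecs" "A s *v vk k = Emat e *v a + Om s *v b"
      "Rev b = beta k s" using beta_dec[OF sU] by blast
    have "b = 0" using intvec_zero[OF ab(2)] ab(4) beta0[OF sU] by simp
    then have "(A s *v vk k) $ i = (Emat e *v a) $ i" using ab(3) by simp
    then have eq: "A s $ i $ k * of_nat (e k) = of_nat (e i) * a $ i"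
      unfolding vk_def vk_mult Emat_mult_nth .
    have ek: "e k > 0" "e i > 0" using epos by auto
    have ai: "a $ i \<in> \<int>" using ab(1) unfolding intvecs_def by blast
    have "A s $ i $ k = of_nat (e i) * a $ i / of_nat (e k)" using eq ek by (simp add: field_simps)
    then have "Im (A s $ i $ k) = 0" using Ints_Im[OF ai] by (simp add: Im_divide)
    moreover have "Re (A s $ i $ k) * of_nat (e k) / of_nat (e i) = Re (a $ i)"
      using arg_cong[OF eq, of Re] ek Ints_Im[OF ai] by (simp add: field_simps)
    ultimately show ?thesis using Ints_Re[OF ai] by simp
  qed
  define L where "L = (\<chi> i k. Re (A s0 $ i $ k))"
  have AL: "A s = cmat L" if "s \<in> U" for s
  proof -
    have "A s $ i $ k = complex_of_real (L $ i $ k)" for i k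
    proof -
      have cont: "continuous_on U (\<lambda>s. Re (A s $ i $ k) * of_nat (e k) / of_nat (e i))"
        by (intro continuous_intros contA) (use epos in auto)
      have "Re (A s $ i $ k) * of_nat (e k) / of_nat (e i) = Re (A s0 $ i $ k) * of_nat (e k) / of_nat (e i)"
        by (rule int_const[OF conn cont _ that s0U]) (use Adec in blast)
      then have "Re (A s $ i $ k) = Re (A s0 $ i $ k)" using epos
        by (simp add: field_simps) (metis gr_implies_not0 of_nat_eq_0_iff)
      then show ?thesis using Adec[OF that] unfolding L_def by (simp add: complex_eq_iff)
    qed
    then show ?thesis by (simp add: cmat_def vec_eq_iff)
  qed
  have Linv: "transpose L ** Yi s ** L = Yi s" if "s \<in> U" for s
  proof -
    have "transpose (cmat L) ** cmat (Yi s) ** cnjM (cmat L) = cmat (Yi s)"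
      using autU[OF that] AL[OF that] by simp
    then have "cmat (transpose L ** Yi s ** L) = cmat (Yi s)"
      by (simp add: cmat_transpose cnjM_cmat cmat_mult)
    then show ?thesis by (rule cmat_inj)
  qed
  have detL: "det L = 1 \<or> det L = -1"
  proof -
    have "det (Yi s0) * det (Y s0) = 1" using invY[OF s0U] det_mul[of "Yi s0" "Y s0"] by simp
    then have nz: "det (Yi s0) \<noteq> 0" by auto
    have "det L * det (Yi s0) * det L = det (Yi s0)"
      using arg_cong[OF Linv[OF s0U], of det] by (simp add: det_mul)
    then have "det L * det L = 1" using nz
      by (metis mult.commute mult.left_commute mult_cancel_right2)
    then show ?thesis by (simp add: square_eq_1_iff)
  qed
  have Lint: "L $ j $ i \<in> \<int>" for i j
  proof -
    define y where "y = axis j (1::real)"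
    have yint: "cvec y \<in> intvecs" unfolding y_def by (rule cvec_int[OF axis_int])
    have "(0::complex^_) \<in> intvecs" by (simp add: intvecs_def)
    then have "Om s0 *v cvec y \<in> Lat e (Om s0)" unfolding Lat_def using yint by force
    then obtain l where l: "l \<in> Lat e (Om s0)" "A s0 *v l = Om s0 *v cvec y"
      using autU[OF s0U] by (metis (no_types, lifting) imageE)
    obtain a b where ab: "a \<in> intvecs" "b \<in> intvecs" "l = Emat e *v a + Om s0 *v b"
      using LatE[OF l(1)] by blast
    have "Imv (A s0 *v l) = L *v (Y s0 *v Rev b)"
      unfolding AL[OF s0U] Imv_cmat ab(3) Imv_add Imv_Emat[OF ab(1)] Imv_Om[OF ab(2)] Y_def by simp
    moreover have "Imv (Om s0 *v cvec y) = Y s0 *v y"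
      unfolding Imv_Om[OF yint] Rev_cvec Y_def ..
    ultimately have eq: "Y s0 *v y = L *v (Y s0 *v Rev b)" using l(2) by simp
    have "transpose L *v y = transpose L *v (Yi s0 *v (Y s0 *v y))"
      using invY[OF s0U] by (simp add: matrix_vector_mul_assoc)
    also have "\<dots> = (transpose L ** Yi s0 ** L) *v (Y s0 *v Rev b)"
      unfolding eq by (simp add: matrix_vector_mul_assoc matrix_mul_assoc)
    also have "\<dots> = Rev b"
      unfolding Linv[OF s0U] using invY[OF s0U] by (simp add: matrix_vector_mul_assoc)
    finally have "(transpose L *v y) $ i = Rev b $ i" by simp
    then show ?thesis using intvecs_Re[OF ab(2)] unfolding y_def axis_col by simp
  qed
  have GL: "L \<in> GLZ" unfolding GLZ_def using Lint detL by blast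
  have invL: "invertible L" using detL invertible_det_nz by force
  define B where "B = Bmat q"
  have LYL: "L ** Y s ** transpose L = Y s" if "s \<in> U" for s
  proof -
    have "(transpose L ** Yi s) ** (L ** Y s) = (transpose L ** Yi s ** L) ** Y s"
      by (simp only: matrix_mul_assoc)
    also have "\<dots> = mat 1" using Linv[OF that] invY[OF that] by simp
    finally have "(L ** Y s) ** (transpose L ** Yi s) = mat 1"
      by (rule matrix_left_right_inverse[THEN iffD1])
    then have "Y s = ((L ** Y s) ** (transpose L ** Yi s)) ** Y s" by simp
    also have "\<dots> = (L ** Y s ** transpose L) ** (Yi s ** Y s)" by (simp only: matrix_mul_assoc)
    also have "\<dots> = L ** Y s ** transpose L" using invY[OF that] by simp
    finally show ?thesis by simp
  qed
  have LBL: "L ** B ** transpose L = B"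
  proof -
    have "(L ** B ** transpose L) $ i $ j = B $ i $ j" for i j
    proof -
      define C where "C = (\<Sum>k\<in>UNIV. \<Sum>l\<in>UNIV. \<bar>L$i$k\<bar> * \<bar>transpose L$l$j\<bar>) * K"
      have "\<forall>t\<ge>max T (max (R + 1) 0). \<bar>t * ((L ** B ** transpose L) $ i $ j - B $ i $ j)\<bar> \<le> K + C"
      proof (intro allI impI)
        fix t assume t: "max T (max (R + 1) 0) \<le> t"
        define ss where "ss = \<i> * complex_of_real t"
        have Imss: "Im ss = t" by (simp add: ss_def)
        have ssU: "ss \<in> U" unfolding U_def' using Imss t by auto
        define D where "D = Y ss - t *\<^sub>R B"
        have "T \<le> Im ss" using Imss t by simp
        then have TKs: "\<forall>i j. \<bar>Y ss $ i $ j - Bmat q $ i $ j * Im ss\<bar> \<le> K" using TK by blast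
        have Dle: "\<forall>i j. \<bar>D$i$j\<bar> \<le> K"
        proof (intro allI)
          fix i j
          have "D$i$j = Y ss $ i $ j - Bmat q $ i $ j * Im ss" by (simp add: D_def B_def Imss mult.commute)
          then show "\<bar>D$i$j\<bar> \<le> K" using TKs by simp
        qed
        have Yss: "Y ss = t *\<^sub>R B + D" by (simp add: D_def)
        have e1: "L ** Y ss ** transpose L = t *\<^sub>R (L ** B ** transpose L) + L ** D ** transpose L"
          unfolding Yss by (simp only: mm_add mm_scale)
        have e2: "t *\<^sub>R (L ** B ** transpose L) + L ** D ** transpose L = t *\<^sub>R B + D"
          using LYL[OF ssU] unfolding e1 Yss[symmetric] .
        have "t * (L ** B ** transpose L) $ i $ j + (L ** D ** transpose L) $ i $ j = t * B $ i $ j + D $ i $ j"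
          using arg_cong[OF e2, of "\<lambda>M. M $ i $ j"] by simp
        then have "t * ((L ** B ** transpose L) $ i $ j - B $ i $ j) = D $ i $ j - (L ** D ** transpose L) $ i $ j"
          by (simp add: algebra_simps)
        moreover have "\<bar>(L ** D ** transpose L) $ i $ j\<bar> \<le> C"
          unfolding C_def by (rule entry_bound[OF Dle])
        moreover have "\<bar>D $ i $ j\<bar> \<le> K" using Dle by blast
        ultimately show "\<bar>t * ((L ** B ** transpose L) $ i $ j - B $ i $ j)\<bar> \<le> K + C" by simp
      qed
      then have "(L ** B ** transpose L) $ i $ j - B $ i $ j = 0" by (rule lin_zero)
      then show ?thesis by simp
    qed
    then show ?thesis by (simp add: vec_eq_iff)
  qed
  have Binv: "invertible B" unfolding B_def by (rule posdef_inv[OF Bpd])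
  define Bi where "Bi = matrix_inv B"
  have BBi: "B ** Bi = mat 1" "Bi ** B = mat 1" using minv[OF Binv] unfolding Bi_def by auto
  have orth: "transpose L ** Bi ** L = Bi"
  proof -
    have "(Bi ** L ** B) ** transpose L = Bi ** (L ** B ** transpose L)"
      by (simp only: matrix_mul_assoc)
    also have "\<dots> = mat 1" using LBL BBi by simp
    finally have "transpose L ** (Bi ** L ** B) = mat 1"
      by (rule matrix_left_right_inverse[THEN iffD1])
    then have "Bi = (transpose L ** (Bi ** L ** B)) ** Bi" by simp
    also have "\<dots> = (transpose L ** Bi ** L) ** (B ** Bi)" by (simp only: matrix_mul_assoc)
    also have "\<dots> = transpose L ** Bi ** L" using BBi by simp
    finally show ?thesis by simp
  qed
  have "restricts_to e (A s0) L" unfolding restricts_to_def AL[OF s0U] by simp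
  then show "\<exists>L. restricts_to e (A s0) L \<and> L \<in> GLZ \<and> L \<in> Orth (matrix_inv (Bmat q))"
    using GL invL orth unfolding Orth_def Bi_def B_def by blast
qed

end
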